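(* Let $\mathcal{V}$ be the set of positive integers $v$ such that $v \equiv 27 \pmod{30}$ and $\operatorname{ord}_p(-2) \equiv 0 \pmod 4$ for each prime divisor $p$ of $v-2$. Then $\mathcal{V}$ is infinite, and for each $v \in \mathcal{V}$ there exists a Steiner triple system of order $v$ having no parallel class.
   Context: A Steiner triple system of order $v$ is a pair $(V,\mathcal{B})$ where $V$ is a set of $v$ points and $\mathcal{B}$ is a collection of $3$-element subsets of $V$ (triples) such that each unordered pair of distinct points lies in exactly one triple of $\mathcal{B}$. A parallel class in a Steiner triple system $(V,\mathcal{B})$ is a subset of $\mathcal{B}$ that partitions $V$. For a prime $p$, $\operatorname{ord}_p(x)$ denotes the multiplicative order of $x$ in $\mathbb{Z}_p$. *)

theory Defs
  imports "HOL-Number_Theory.Number_Theory"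
begin

definition steiner_triple_system :: "'a set \<Rightarrow> 'a set set \<Rightarrow> bool" where
  "steiner_triple_system V B \<longleftrightarrow>
     finite V \<and>
     (\<forall>b\<in>B. b \<subseteq> V \<and> card b = 3) \<and>
     (\<forall>x\<in>V. \<forall>y\<in>V. x \<noteq> y \<longrightarrow> (\<exists>!b. b \<in> B \<and> x \<in> b \<and> y \<in> b))"

definition parallel_class :: "'a set \<Rightarrow> 'a set set \<Rightarrow> 'a set set \<Rightarrow> bool" where
  "parallel_class V B P \<longleftrightarrow>
     P \<subseteq> B \<and> \<Union>P = V \<and>
     (\<forall>b1\<in>P. \<forall>b2\<in>P. b1 \<noteq> b2 \<longrightarrow> b1 \<inter> b2 = {})"

definition ord_mod :: "nat \<Rightarrow> int \<Rightarrow> nat" where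
  "ord_mod p x = ord p (nat (x mod int p))"

definition V_set :: "nat set" where
  "V_set = {v. v > 0 \<and> v mod 30 = 27 \<and>
      (\<forall>p. prime p \<and> p dvd (v - 2) \<longrightarrow> ord_mod p (-2) mod 4 = 0)}"

end

theory Submission
  imports Defs
begin

lemma key_even:
  fixes m x :: int and j :: nat and e :: int
  assumes mpos: "m > 0"
    and hyp: "\<forall>p::nat. prime p \<and> int p dvd m \<longrightarrow> ord_mod p (-2) mod 4 = 0"
    and nx: "\<not> m dvd x" and e: "e = 1 \<or> e = -1"
    and d: "m dvd ((-2)^j * x - e * x)"
  shows "even j"
proof -
  define g where "g = gcd x m"
  have gpos: "g > 0" using mpos g_def by simp
  obtain x' where x': "x = g * x'" using g_def by (metis gcd_dvd1 dvd_def)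
  obtain d where dd: "m = g * d" using g_def by (metis gcd_dvd2 dvd_def)
  have dpos: "d > 0" using mpos gpos dd by (simp add: zero_less_mult_iff)
  have cop: "coprime x' d"
  proof -
    have "gcd x m = g * gcd x' d" using x' dd gpos by (simp add: gcd_mult_left)
    then have "gcd x' d = 1" using g_def gpos mpos by auto
    then show ?thesis by (simp add: coprime_iff_gcd_eq_1)
  qed
  have d1: "d \<noteq> 1" using nx x' dd by auto
  have "g * d dvd g * (((-2)^j - e) * x')" using d x' dd by (simp add: algebra_simps)
  then have "d dvd ((-2)^j - e) * x'" using gpos by simp
  then have dd2: "d dvd ((-2)^j - e)" using cop
    by (metis coprime_commute coprime_dvd_mult_left_iff)
  have "nat d \<noteq> 1" using d1 dpos by simp
  then obtain p where p: "prime p" "p dvd nat d" using prime_factor_nat by blast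
  have pd: "int p dvd d" using p(2) dpos by (metis int_nat_eq less_imp_le of_nat_dvd_iff)
  have pm: "int p dvd m" using pd dd by simp
  have "((-2::int)^j - e) * ((-2)^j + e) = (-2)^(2*j) - 1"
    using e by (auto simp: algebra_simps power_mult power2_eq_square)
  moreover have "int p dvd ((-2)^j - e) * ((-2)^j + e)" using pd dd2 by (meson dvd_mult2 dvd_trans)
  ultimately have pd3: "int p dvd (-2)^(2*j) - 1" by simp
  define q where "q = nat ((-2) mod int p)"
  have pp: "int p > 0" using p by (simp add: prime_gt_0_nat)
  have iq: "int q = (-2) mod int p" using q_def pp by simp
  have "[int q ^ (2*j) = 1] (mod int p)"
  proof -
    have "[int q = -2] (mod int p)" using iq by (simp add: cong_def)
    then have "[int q ^ (2*j) = (-2)^(2*j)] (mod int p)" by (rule cong_pow)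
    moreover have "[(-2::int)^(2*j) = 1] (mod int p)" using pd3 by (simp add: cong_iff_dvd_diff)
    ultimately show ?thesis by (rule cong_trans)
  qed
  then have "[q ^ (2*j) = 1] (mod p)" by (metis cong_int_iff of_nat_1 of_nat_power)
  then have "ord p q dvd 2*j" using ord_divides by blast
  moreover have "ord_mod p (-2) = ord p q" by (simp add: ord_mod_def q_def)
  moreover have "ord_mod p (-2) mod 4 = 0" using hyp p pm by blast
  ultimately have "4 dvd 2*j" by (metis dvd_trans mod_0_imp_dvd)
  then show ?thesis by presburger
qed


locale col =
  fixes m :: int
  assumes mpos: "m > 0" and modd: "odd m"
    and hyp: "\<forall>p::nat. prime p \<and> int p dvd m \<longrightarrow> ord_mod p (-2) mod 4 = 0"
begin

definition R :: "int \<Rightarrow> int \<Rightarrow> bool" where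
  "R x y \<longleftrightarrow> (\<exists>i j e. (e = 1 \<or> e = -1) \<and> [(-2)^i * y = e * (-2)^j * x] (mod m))"

definition mu :: "int \<Rightarrow> int" where
  "mu x = int (LEAST k::nat. R x (int k))"

definition rep :: "int \<Rightarrow> nat \<Rightarrow> nat \<Rightarrow> bool" where
  "rep x i j \<longleftrightarrow> (\<exists>e. (e = 1 \<or> e = -1) \<and> [(-2)^i * x = e * (-2)^j * mu x] (mod m))"

definition chi :: "int \<Rightarrow> bool" where
  "chi x = (let p = (SOME p. rep x (fst p) (snd p)) in even (fst p + snd p))"

lemma cop2: "coprime ((-2::int)^i) m"
proof -
  have "coprime (2::int) m" using modd by (simp add: coprime_commute)
  then have "coprime (-2::int) m" by simp
  then show ?thesis by simp
qed

lemma R_refl: "R x x"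
  unfolding R_def by (rule exI[of _ 0], rule exI[of _ 0], rule exI[of _ 1]) simp

lemma R_sym: "R x y \<Longrightarrow> R y x"
  unfolding R_def
proof (elim exE conjE)
  fix i j e assume e: "e = (1::int) \<or> e = -1" and c: "[(-2)^i * y = e * (-2)^j * x] (mod m)"
  have "[e * ((-2)^i * y) = e * (e * (-2)^j * x)] (mod m)" using c by (rule cong_scalar_left)
  moreover have "e * (e * (-2)^j * x) = (-2)^j * x" using e by auto
  ultimately have "[e * ((-2)^i * y) = (-2)^j * x] (mod m)" by simp
  then have "[(-2)^j * x = e * ((-2)^i * y)] (mod m)" by (rule cong_sym)
  then have "[(-2)^j * x = e * (-2)^i * y] (mod m)" by (simp add: mult.assoc)
  then show "\<exists>i j e. (e = 1 \<or> e = -1) \<and> [(-2)^i * x = e * (-2)^j * y] (mod m)" using e by blast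
qed

lemma R_trans: "R x y \<Longrightarrow> R y z \<Longrightarrow> R x z"
  unfolding R_def
proof (elim exE conjE)
  fix i j e i' j' e'
  assume e: "e = (1::int) \<or> e = -1" and c: "[(-2)^i * y = e * (-2)^j * x] (mod m)"
    and e': "e' = (1::int) \<or> e' = -1" and c': "[(-2)^i' * z = e' * (-2)^j' * y] (mod m)"
  have "[(-2)^i * ((-2)^i' * z) = (-2)^i * (e' * (-2)^j' * y)] (mod m)" using c' by (rule cong_scalar_left)
  moreover have "(-2)^i * (e' * (-2)^j' * y) = e' * (-2)^j' * ((-2)^i * y)" by (simp add: ac_simps)
  moreover have "[e' * (-2)^j' * ((-2)^i * y) = e' * (-2)^j' * (e * (-2)^j * x)] (mod m)"
    using c by (rule cong_scalar_left)
  ultimately have "[(-2)^(i+i') * z = (e'*e) * (-2)^(j'+j) * x] (mod m)"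
    by (simp add: power_add ac_simps cong_trans)
  moreover have "e'*e = 1 \<or> e'*e = -1" using e e' by auto
  ultimately show "\<exists>i j e. (e = 1 \<or> e = -1) \<and> [(-2)^i * z = e * (-2)^j * x] (mod m)" by blast
qed

lemma R_cong: "[x = x'] (mod m) \<Longrightarrow> R x y \<Longrightarrow> R x' y"
  unfolding R_def
proof (elim exE conjE)
  fix i j e assume c0: "[x = x'] (mod m)" and e: "e = (1::int) \<or> e = -1" and c: "[(-2)^i * y = e * (-2)^j * x] (mod m)"
  have "[e * (-2)^j * x = e * (-2)^j * x'] (mod m)" using c0 by (rule cong_scalar_left)
  then have "[(-2)^i * y = e * (-2)^j * x'] (mod m)" using c cong_trans by blast
  then show "\<exists>i j e. (e = 1 \<or> e = -1) \<and> [(-2)^i * y = e * (-2)^j * x'] (mod m)" using e by blast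
qed

lemma R_neg2: "R x (-2 * x)"
  unfolding R_def by (rule exI[of _ 0], rule exI[of _ 1], rule exI[of _ 1]) simp

lemma R_neg: "R x (- x)"
  unfolding R_def by (rule exI[of _ 0], rule exI[of _ 0], rule exI[of _ "-1"]) simp

lemma R_mu: "R x (mu x)"
proof -
  have "R x (int (nat (x mod m)))" using mpos
    by (metis R_cong R_refl R_sym cong_mod_left cong_refl int_nat_eq pos_mod_sign less_imp_le)
  then have "\<exists>k::nat. R x (int k)" by blast
  then show ?thesis unfolding mu_def by (rule LeastI_ex)
qed

lemma mu_eqI: "R x y \<Longrightarrow> mu x = mu y"
proof -
  assume r: "R x y"
  have "\<And>z. R x z = R y z" using r R_sym R_trans by blast
  then show ?thesis unfolding mu_def by simp
qed

lemma rep_ex: "\<exists>i j. rep x i j"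
proof -
  have "R (mu x) x" using R_mu R_sym by blast
  then obtain i j e where "(e = 1 \<or> e = -1)" "[(-2)^i * x = e * (-2)^j * mu x] (mod m)"
    unfolding R_def by blast
  then show ?thesis unfolding rep_def by blast
qed

lemma rep_parity:
  assumes nx: "\<not> m dvd x" and r1: "rep x i1 j1" and r2: "rep x i2 j2"
  shows "even (i1 + j1) = even (i2 + j2)"
proof -
  obtain e1 where e1: "e1 = 1 \<or> e1 = -1" and c1: "[(-2)^i1 * x = e1 * (-2)^j1 * mu x] (mod m)"
    using r1 unfolding rep_def by blast
  obtain e2 where e2: "e2 = 1 \<or> e2 = -1" and c2: "[(-2)^i2 * x = e2 * (-2)^j2 * mu x] (mod m)"
    using r2 unfolding rep_def by blast
  have numu: "\<not> m dvd mu x"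
  proof
    assume "m dvd mu x"
    then have "m dvd e1 * (-2)^j1 * mu x" by simp
    then have "m dvd (-2)^i1 * x" using c1 by (metis cong_dvd_iff)
    then have "m dvd x" using cop2[of i1] by (metis coprime_commute coprime_dvd_mult_right_iff)
    then show False using nx by simp
  qed
  have A: "[(-2)^(i2+j1) * (e1 * mu x) = (-2)^(i1+j2) * (e2 * mu x)] (mod m)"
  proof -
    have "[(-2)^i2 * ((-2)^i1 * x) = (-2)^i2 * (e1 * (-2)^j1 * mu x)] (mod m)" using c1 by (rule cong_scalar_left)
    moreover have "[(-2)^i1 * ((-2)^i2 * x) = (-2)^i1 * (e2 * (-2)^j2 * mu x)] (mod m)" using c2 by (rule cong_scalar_left)
    ultimately have "[(-2)^i2 * (e1 * (-2)^j1 * mu x) = (-2)^i1 * (e2 * (-2)^j2 * mu x)] (mod m)"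
      by (metis cong_sym cong_trans mult.left_commute)
    then show ?thesis by (simp add: power_add ac_simps)
  qed
  have gen: "\<And>a b f1 f2. (f1 = 1 \<or> f1 = -1) \<Longrightarrow> (f2 = 1 \<or> f2 = -1) \<Longrightarrow> a \<le> b \<Longrightarrow>
      [(-2)^a * (f1 * mu x) = (-2)^b * (f2 * mu x)] (mod m) \<Longrightarrow> even a = even b"
  proof -
    fix a b :: nat and f1 f2 :: int
    assume f1: "f1 = 1 \<or> f1 = -1" and f2: "f2 = 1 \<or> f2 = -1" and ab: "a \<le> b"
      and c: "[(-2)^a * (f1 * mu x) = (-2)^b * (f2 * mu x)] (mod m)"
    have "(-2::int)^b = (-2)^a * (-2)^(b-a)" using ab by (simp add: power_add[symmetric])
    then have "[(-2)^a * (f1 * mu x) = (-2)^a * ((-2)^(b-a) * (f2 * mu x))] (mod m)" using c by (simp add: ac_simps)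
    then have "[f1 * mu x = (-2)^(b-a) * (f2 * mu x)] (mod m)" using cop2 cong_mult_lcancel by blast
    then have "[f2 * (f1 * mu x) = f2 * ((-2)^(b-a) * (f2 * mu x))] (mod m)" by (rule cong_scalar_left)
    moreover have h2: "f2 * ((-2)^(b-a) * (f2 * mu x)) = (-2)^(b-a) * mu x" using f2 by auto
    ultimately have "[f2 * (f1 * mu x) = (-2)^(b-a) * mu x] (mod m)" by (simp only: h2)
    then have "[(-2)^(b-a) * mu x = f2 * (f1 * mu x)] (mod m)" by (rule cong_sym)
    then have "[(-2)^(b-a) * mu x = (f2*f1) * mu x] (mod m)" by (simp only: mult.assoc)
    then have "m dvd (-2)^(b-a) * mu x - (f2*f1) * mu x" by (simp add: cong_iff_dvd_diff)
    moreover have "f2*f1 = 1 \<or> f2*f1 = -1" using f1 f2 by auto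
    ultimately have "even (b - a)" using key_even[OF mpos hyp numu] by blast
    then show "even a = even b" using ab by auto
  qed
  show ?thesis
  proof (cases "i2 + j1 \<le> i1 + j2")
    case True
    then have "even (i2+j1) = even (i1+j2)" using gen[OF e1 e2 True A] by simp
    then show ?thesis by auto
  next
    case False
    then have "even (i1+j2) = even (i2+j1)" using gen[OF e2 e1 _ cong_sym[OF A]] by simp
    then show ?thesis by auto
  qed
qed

lemma chi_rep: "\<not> m dvd x \<Longrightarrow> rep x i j \<Longrightarrow> chi x = even (i + j)"
proof -
  assume nx: "\<not> m dvd x" and r: "rep x i j"
  define p where "p = (SOME p. rep x (fst p) (snd p))"
  have "\<exists>p. rep x (fst p) (snd p)" using rep_ex by auto
  then have "rep x (fst p) (snd p)" unfolding p_def by (rule someI_ex)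
  then have "even (fst p + snd p) = even (i + j)" using rep_parity[OF nx _ r] by blast
  then show ?thesis unfolding chi_def p_def[symmetric] Let_def by simp
qed

lemma chi_neg2: assumes nx: "\<not> m dvd x" shows "chi (-2 * x) = (\<not> chi x)"
proof -
  obtain i j where r: "rep x i j" using rep_ex by blast
  have mu: "mu (-2 * x) = mu x" using mu_eqI[OF R_neg2] by simp
  have "rep (-2 * x) i (Suc j)"
    using r unfolding rep_def mu
  proof (elim exE conjE)
    fix e assume e: "e = (1::int) \<or> e = -1" and c: "[(-2)^i * x = e * (-2)^j * mu x] (mod m)"
    have "[(-2) * ((-2)^i * x) = (-2) * (e * (-2)^j * mu x)] (mod m)" using c by (rule cong_scalar_left)
    then have "[(-2)^i * (-2 * x) = e * (-2)^Suc j * mu x] (mod m)" by (simp add: ac_simps)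
    then show "\<exists>e. (e = 1 \<or> e = -1) \<and> [(-2)^i * (-2 * x) = e * (-2)^Suc j * mu x] (mod m)" using e by blast
  qed
  moreover have "\<not> m dvd (-2 * x)"
    using nx cop2[of 1] by (simp add: coprime_commute coprime_dvd_mult_right_iff)
  ultimately have "chi (-2*x) = even (i + Suc j)" using chi_rep by blast
  moreover have "chi x = even (i + j)" using chi_rep[OF nx r] .
  ultimately show ?thesis by simp
qed

lemma chi_neg: assumes nx: "\<not> m dvd x" shows "chi (- x) = chi x"
proof -
  obtain i j where r: "rep x i j" using rep_ex by blast
  have mu: "mu (- x) = mu x" using mu_eqI[OF R_neg] by simp
  have "rep (- x) i j"
    using r unfolding rep_def mu
  proof (elim exE conjE)
    fix e assume e: "e = (1::int) \<or> e = -1" and c: "[(-2)^i * x = e * (-2)^j * mu x] (mod m)"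
    have "[(-1) * ((-2)^i * x) = (-1) * (e * (-2)^j * mu x)] (mod m)" using c by (rule cong_scalar_left)
    then have "[(-2)^i * (- x) = (-e) * (-2)^j * mu x] (mod m)" by simp
    moreover have "-e = 1 \<or> -e = -1" using e by auto
    ultimately show "\<exists>e. (e = 1 \<or> e = -1) \<and> [(-2)^i * (- x) = e * (-2)^j * mu x] (mod m)" by blast
  qed
  moreover have "\<not> m dvd (- x)" using nx by simp
  ultimately have "chi (- x) = even (i + j)" using chi_rep by blast
  then show ?thesis using chi_rep[OF nx r] by simp
qed

lemma chi_cong: assumes c: "[x = x'] (mod m)" shows "chi x = chi x'"
proof -
  have "R x x'" using R_cong[OF c R_refl] by (rule R_sym)
  then have mu: "mu x = mu x'" by (rule mu_eqI)
  have "\<And>i j. rep x i j = rep x' i j"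
  proof -
    fix i j
    have "[(-2)^i * x = (-2)^i * x'] (mod m)" using c by (rule cong_scalar_left)
    then have "\<And>z. [(-2)^i*x = z] (mod m) = [(-2)^i*x' = z] (mod m)" by (meson cong_sym cong_trans)
    then show "rep x i j = rep x' i j" unfolding rep_def mu by simp
  qed
  then have "(\<lambda>p. rep x (fst p) (snd p)) = (\<lambda>p. rep x' (fst p) (snd p))" by auto
  then show ?thesis unfolding chi_def by simp
qed

end


lemma fano1: "l1 \<in> {1,2,3,4,5,6,7} \<Longrightarrow> l2 \<in> {1,2,3,4,5,6,7} \<Longrightarrow> l1 \<noteq> l2 \<Longrightarrow>
   xor l1 l2 \<in> {1,2,3,4,5,6,7::nat} \<and> xor l1 l2 \<noteq> l1 \<and> xor l1 l2 \<noteq> l2" by auto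

lemma fano_inv: "xor (l1::nat) (xor l1 l2) = l2"
  by (simp add: xor.assoc[symmetric])

lemma fano2: "l1 \<in> {2,3,4,5,7} \<Longrightarrow> l2 \<in> {2,3,4,5,7} \<Longrightarrow> l1 \<noteq> l2 \<Longrightarrow>
   xor l1 l2 \<in> {2,3,4,5,7::nat} \<Longrightarrow> 7 \<in> {l1, l2, xor l1 l2}" by auto

lemma fano3: "l1 \<in> {2,3,4,5} \<Longrightarrow> l2 \<in> {2,3,4,5::nat} \<Longrightarrow>
   \<exists>l. l \<in> {l1, xor 1 l1} \<and> l \<in> {l2, xor 6 l2}" by auto



locale cons =
  fixes n m :: int
  assumes npos: "n > 0" and nodd: "odd n" and n3: "\<not> 3 dvd n" and n_eq: "n = 5 * m"
    and hypn: "\<forall>p::nat. prime p \<and> int p dvd n \<longrightarrow> ord_mod p (-2) mod 4 = 0"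
begin

lemma m_pos: "m > 0" using npos n_eq by linarith
lemma m_dvd_n: "m dvd n" by (metis dvd_triv_right n_eq)

sublocale col m
proof
  show "m > 0" by (rule m_pos)
  show "odd m" using nodd n_eq by simp
  show "\<forall>p::nat. prime p \<and> int p dvd m \<longrightarrow> ord_mod p (-2) mod 4 = 0"
    using hypn m_dvd_n dvd_trans by blast
qed

definition inZ :: "int \<Rightarrow> bool" where "inZ x \<longleftrightarrow> 0 \<le> x \<and> x < n"
definition inK :: "int \<Rightarrow> bool" where "inK x \<longleftrightarrow> x = n \<or> x = n + 1 \<or> (inZ x \<and> m dvd x)"
definition inV :: "int \<Rightarrow> bool" where "inV x \<longleftrightarrow> 0 \<le> x \<and> x < n + 2"

definition lab :: "int \<Rightarrow> nat" where
  "lab x = (if x = n then 1 else if x = n + 1 then 6 else if x div m = 4 then 7 else nat (x div m) + 2)"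
definition unlab :: "nat \<Rightarrow> int" where
  "unlab l = (if l = 1 then n else if l = 6 then n + 1 else if l = 7 then 4 * m else (int l - 2) * m)"

definition neg2 :: "int \<Rightarrow> int" where "neg2 x = (-2 * x) mod n"
definition inv2 :: "int \<Rightarrow> int" where "inv2 x = (- (x * ((n + 1) div 2))) mod n"

lemma lab_km: "0 \<le> k \<Longrightarrow> k < 4 \<Longrightarrow> lab (k * m) = nat k + 2"
proof -
  assume k: "0 \<le> k" "k < 4"
  have "k * m < 5 * m" using k m_pos by (intro mult_strict_right_mono) auto
  then have "k * m < n" using n_eq by simp
  moreover have "(k * m) div m = k" using m_pos by simp
  ultimately show ?thesis using k by (simp add: lab_def)
qed

lemma lab_4m: "lab (4 * m) = 7"
proof -
  have "4 * m < n" using m_pos n_eq by linarith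
  moreover have "(4 * m) div m = 4" using m_pos by simp
  ultimately show ?thesis by (simp add: lab_def)
qed

lemma inK_km: "0 \<le> k \<Longrightarrow> k < 5 \<Longrightarrow> inK (k * m)"
proof -
  assume k: "0 \<le> k" "k < 5"
  have "k * m < 5 * m" using k m_pos by (intro mult_strict_right_mono) auto
  then have "k * m < n" using n_eq by simp
  moreover have "0 \<le> k * m" using k m_pos by simp
  ultimately show ?thesis by (simp add: inK_def inZ_def)
qed

lemma lab_unlab: assumes l: "l \<in> {1,2,3,4,5,6,7}" shows "lab (unlab l) = l \<and> inK (unlab l)"
proof -
  have n1: "n \<noteq> n + 1" by simp
  from l consider "l = 1" | "l = 2" | "l = 3" | "l = 4" | "l = 5" | "l = 6" | "l = 7" by auto
  then show ?thesis
  proof cases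
    case 1 then show ?thesis by (simp add: lab_def unlab_def inK_def)
  next
    case 2 then show ?thesis using lab_km[of 0] inK_km[of 0] by (simp add: unlab_def)
  next
    case 3 then show ?thesis using lab_km[of 1] inK_km[of 1] by (simp add: unlab_def)
  next
    case 4 then show ?thesis using lab_km[of 2] inK_km[of 2] by (simp add: unlab_def)
  next
    case 5 then show ?thesis using lab_km[of 3] inK_km[of 3] by (simp add: unlab_def)
  next
    case 6 then show ?thesis by (simp add: lab_def unlab_def inK_def)
  next
    case 7 then show ?thesis using lab_4m inK_km[of 4] by (simp add: unlab_def)
  qed
qed

lemma inK_cases: assumes "inK x"
  obtains "x = n" | "x = n + 1" | k where "0 \<le> k" "k < 5" "x = k * m"
proof -
  have "x = n \<or> x = n + 1 \<or> (\<exists>k. 0 \<le> k \<and> k < 5 \<and> x = k * m)"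
  proof (cases "x = n \<or> x = n + 1")
    case False
    then have z: "inZ x" "m dvd x" using assms by (auto simp: inK_def)
    then obtain k where xk: "x = m * k" by blast
    have k0: "0 \<le> k" using z m_pos xk by (auto simp: inZ_def zero_le_mult_iff)
    have "m * k < n" using z xk by (simp add: inZ_def)
    then have mk: "m * k < m * 5" using n_eq by (simp add: mult.commute)
    have "k < 5" using mk m_pos by (simp add: mult_less_cancel_left_pos)
    show ?thesis using k0 \<open>k < 5\<close> xk by (auto simp: mult.commute)
  qed auto
  then show ?thesis using that by blast
qed

lemma lab_K: assumes "0 \<le> k" "k < 5" shows "lab (k * m) \<in> {2,3,4,5,7} \<and> unlab (lab (k * m)) = k * m"
proof -
  from assms consider "k = 0" | "k = 1" | "k = 2" | "k = 3" | "k = 4" by linarith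
  then show ?thesis
  proof cases
    case 1 then show ?thesis using lab_km[of 0] by (simp add: unlab_def)
  next
    case 2 then show ?thesis using lab_km[of 1] by (simp add: unlab_def)
  next
    case 3 then show ?thesis using lab_km[of 2] by (simp add: unlab_def)
  next
    case 4 then show ?thesis using lab_km[of 3] by (simp add: unlab_def)
  next
    case 5 then show ?thesis using lab_4m by (simp add: unlab_def)
  qed
qed

lemma lab_range: "inK x \<Longrightarrow> lab x \<in> {1,2,3,4,5,6,7}"
proof (erule inK_cases)
  fix k assume k: "0 \<le> k" "k < 5" "x = k * m"
  then show ?thesis using lab_K[of k] by auto
qed (auto simp: lab_def)

lemma unlab_lab: "inK x \<Longrightarrow> unlab (lab x) = x"
proof (erule inK_cases)
  fix k assume k: "0 \<le> k" "k < 5" "x = k * m"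
  then show ?thesis using lab_K[of k] by auto
qed (auto simp: lab_def unlab_def)

lemma labZ: "inK x \<Longrightarrow> inZ x \<Longrightarrow> lab x \<in> {2,3,4,5,7} \<and> m dvd x"
proof (erule inK_cases)
  fix k assume k: "0 \<le> k" "k < 5" "x = k * m"
  then show ?thesis using lab_K[of k] by auto
qed (auto simp: inZ_def)

definition th :: "int \<Rightarrow> int \<Rightarrow> int" where
  "th x y = (if inK x \<and> inK y then unlab (xor (lab x) (lab y))
     else if x = n then (if chi y then neg2 y else inv2 y)
     else if y = n then (if chi x then neg2 x else inv2 x)
     else if x = n + 1 then (if chi y then inv2 y else neg2 y)
     else if y = n + 1 then (if chi x then inv2 x else neg2 x)
     else if y = neg2 x then (if chi x then n else n + 1)
     else if x = neg2 y then (if chi y then n else n + 1)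
     else (- x - y) mod n)"

end


context cons begin

lemma inZ_mod: "inZ (a mod n)" using npos by (simp add: inZ_def)
lemma mod_char: "inZ y \<Longrightarrow> (a mod n = y) \<longleftrightarrow> n dvd (a - y)"
  by (metis inZ_def mod_eq_dvd_iff mod_pos_pos_trivial)
lemma mod_d: "n dvd (a mod n - a)"
  by (metis mod_eq_dvd_iff mod_mod_trivial)
lemma eqZ: "inZ a \<Longrightarrow> inZ b \<Longrightarrow> n dvd (a - b) \<Longrightarrow> a = b"
  by (metis mod_char inZ_def mod_pos_pos_trivial)
lemma cop3: "coprime (3::int) n"
proof -
  have "prime (3::int)" by simp
  then show ?thesis using n3 by (simp add: prime_imp_coprime)
qed
lemma cop2n: "coprime (2::int) n" using nodd by simp
lemma cop2m: "coprime (2::int) m" using modd by simp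
lemma canc: assumes "coprime k n" "n dvd k * u" shows "n dvd u"
proof -
  have "coprime n k" using assms(1) by (simp add: coprime_commute)
  then show ?thesis using assms(2) coprime_dvd_mult_right_iff by blast
qed
lemma cancm: assumes "coprime k m" "m dvd k * u" shows "m dvd u"
proof -
  have "coprime m k" using assms(1) by (simp add: coprime_commute)
  then show ?thesis using assms(2) coprime_dvd_mult_right_iff by blast
qed
lemma mdn: "m dvd n" using n_eq by simp
lemma inZ0: "inZ 0" using npos by (simp add: inZ_def)
lemma three: assumes "inZ x" "n dvd 3 * x" shows "x = 0"
proof -
  have "n dvd x" using canc[OF cop3 assms(2)] .
  then show ?thesis using eqZ[OF assms(1) inZ0] by simp
qed

lemma neg2_Z: "inZ (neg2 x)" unfolding neg2_def by (rule inZ_mod)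
lemma inv2_Z: "inZ (inv2 x)" unfolding inv2_def by (rule inZ_mod)
lemma neg2_d: "n dvd (neg2 x + 2 * x)"
  using mod_d[of "-2 * x"] unfolding neg2_def by simp
lemma inv2_d: "n dvd (2 * inv2 x + x)"
proof -
  define c where "c = (n + 1) div 2"
  have c2: "2 * c = n + 1" using nodd unfolding c_def by presburger
  have d: "n dvd (inv2 x + x * c)" using mod_d[of "- (x * c)"] unfolding inv2_def c_def by simp
  have "2 * (inv2 x + x * c) - n * x = 2 * inv2 x + x * (2 * c) - n * x" by (simp add: algebra_simps)
  also have "\<dots> = 2 * inv2 x + x" using c2 by (simp add: algebra_simps)
  finally have e: "2 * (inv2 x + x * c) - n * x = 2 * inv2 x + x" .
  have "n dvd 2 * (inv2 x + x * c) - n * x" by (rule dvd_diff[OF dvd_mult[OF d] dvd_triv_left])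
  then show ?thesis unfolding e .
qed

lemma neg2_inv2: "inZ x \<Longrightarrow> neg2 (inv2 x) = x"
proof -
  assume z: "inZ x"
  have "n dvd (neg2 (inv2 x) + 2 * inv2 x)" by (rule neg2_d)
  moreover have "n dvd (2 * inv2 x + x)" by (rule inv2_d)
  ultimately have "n dvd (neg2 (inv2 x) + 2 * inv2 x) - (2 * inv2 x + x)" by (rule dvd_diff)
  then show ?thesis using eqZ[OF neg2_Z z] by simp
qed

lemma inv2_neg2: "inZ x \<Longrightarrow> inv2 (neg2 x) = x"
proof -
  assume z: "inZ x"
  have "n dvd (2 * inv2 (neg2 x) + neg2 x)" by (rule inv2_d)
  moreover have "n dvd (neg2 x + 2 * x)" by (rule neg2_d)
  ultimately have "n dvd (2 * inv2 (neg2 x) + neg2 x) - (neg2 x + 2 * x)" by (rule dvd_diff)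
  then have "n dvd 2 * (inv2 (neg2 x) - x)" by (simp add: algebra_simps)
  then have "n dvd (inv2 (neg2 x) - x)" by (rule canc[OF cop2n])
  then show ?thesis using eqZ[OF inv2_Z z] by simp
qed

lemma inv2_ne: "inZ x \<Longrightarrow> x \<noteq> 0 \<Longrightarrow> inv2 x \<noteq> x"
proof
  assume z: "inZ x" "x \<noteq> 0" and e: "inv2 x = x"
  have "n dvd (2 * inv2 x + x)" by (rule inv2_d)
  then have "n dvd 3 * x" using e by simp
  then show False using three z by blast
qed

lemma neg2_ne': "inZ x \<Longrightarrow> x \<noteq> 0 \<Longrightarrow> neg2 x \<noteq> x"
proof
  assume z: "inZ x" "x \<noteq> 0" and e: "neg2 x = x"
  have "n dvd (neg2 x + 2 * x)" by (rule neg2_d)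
  then have "n dvd 3 * x" using e by simp
  then show False using three z by blast
qed

lemma inv2_ne_neg2: "inZ x \<Longrightarrow> x \<noteq> 0 \<Longrightarrow> inv2 x \<noteq> neg2 x"
proof
  assume z: "inZ x" "x \<noteq> 0" and e: "inv2 x = neg2 x"
  have "n dvd 2 * (neg2 x + 2 * x)" by (rule dvd_mult[OF neg2_d])
  moreover have "n dvd (2 * inv2 x + x)" by (rule inv2_d)
  ultimately have "n dvd 2 * (neg2 x + 2 * x) - (2 * inv2 x + x)" by (rule dvd_diff)
  then have "n dvd 3 * x" using e by (simp add: algebra_simps)
  then show False using three z by blast
qed

lemma m_neg2: "m dvd neg2 x \<longleftrightarrow> m dvd x"
proof -
  have d: "m dvd (neg2 x + 2 * x)" using neg2_d mdn dvd_trans by blast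
  show ?thesis
  proof
    assume "m dvd neg2 x"
    then have "m dvd 2 * x" using d by (metis add_diff_cancel_left' dvd_diff)
    then show "m dvd x" by (rule cancm[OF cop2m])
  next
    assume "m dvd x"
    then have "m dvd 2 * x" by simp
    then show "m dvd neg2 x" using d by (metis add_diff_cancel_right' dvd_diff)
  qed
qed

lemma m_inv2: "m dvd inv2 x \<longleftrightarrow> m dvd x"
proof -
  have d: "m dvd (2 * inv2 x + x)" using inv2_d mdn dvd_trans by blast
  show ?thesis
  proof
    assume "m dvd inv2 x"
    then have "m dvd 2 * inv2 x" by simp
    then show "m dvd x" using d by (metis add_diff_cancel_left' dvd_diff)
  next
    assume "m dvd x"
    then have "m dvd 2 * inv2 x" using d by (metis add_diff_cancel_right' dvd_diff)
    then show "m dvd inv2 x" by (rule cancm[OF cop2m])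
  qed
qed

lemma chi_n2: "\<not> m dvd x \<Longrightarrow> chi (neg2 x) = (\<not> chi x)"
proof -
  assume nx: "\<not> m dvd x"
  have d: "m dvd (neg2 x + 2 * x)" using neg2_d mdn dvd_trans by blast
  then have "[neg2 x = -2 * x] (mod m)" by (simp add: cong_iff_dvd_diff)
  then have "chi (neg2 x) = chi (-2 * x)" by (rule chi_cong)
  then show ?thesis using chi_neg2[OF nx] by simp
qed

lemma chi_i2: "\<not> m dvd x \<Longrightarrow> chi (inv2 x) = (\<not> chi x)"
proof -
  assume nx: "\<not> m dvd x"
  have d: "m dvd (2 * inv2 x + x)" using inv2_d mdn dvd_trans by blast
  then have "[x = -2 * inv2 x] (mod m)" by (simp add: cong_iff_dvd_diff add.commute)
  then have "chi x = chi (-2 * inv2 x)" by (rule chi_cong)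
  moreover have "\<not> m dvd inv2 x" using nx m_inv2 by simp
  ultimately show ?thesis using chi_neg2 by simp
qed

end


context cons begin

lemma inK_n: "inK n" and inK_n1: "inK (n + 1)" by (simp_all add: inK_def)
lemma inZ_ne: "inZ x \<Longrightarrow> x \<noteq> n \<and> x \<noteq> n + 1" by (simp add: inZ_def)
lemma inV_cases: "inV x \<Longrightarrow> inZ x \<or> x = n \<or> x = n + 1" by (auto simp: inV_def inZ_def)
lemma inV_Z: "inZ x \<Longrightarrow> inV x" by (simp add: inV_def inZ_def)
lemma inV_n: "inV n" and inV_n1: "inV (n + 1)" using npos by (simp_all add: inV_def)
lemma inK_V: "inK x \<Longrightarrow> inV x" using inV_n inV_n1 inV_Z inK_def by auto
lemma nK_Z: "inV x \<Longrightarrow> \<not> inK x \<Longrightarrow> inZ x \<and> \<not> m dvd x"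
  using inV_cases inK_def by blast
lemma nK_nz: "\<not> m dvd x \<Longrightarrow> x \<noteq> 0" by auto
lemma Z_nK: "inZ x \<Longrightarrow> \<not> m dvd x \<Longrightarrow> \<not> inK x"
  using inZ_ne inK_def by blast

lemma th_K: "inK x \<Longrightarrow> inK y \<Longrightarrow> th x y = unlab (xor (lab x) (lab y))"
  by (simp add: th_def)
lemma th_a: "\<not> inK y \<Longrightarrow> th n y = (if chi y then neg2 y else inv2 y)"
  by (simp add: th_def)
lemma th_a': "\<not> inK x \<Longrightarrow> th x n = (if chi x then neg2 x else inv2 x)"
  using inK_n by (auto simp add: th_def)
lemma th_b: "\<not> inK y \<Longrightarrow> th (n + 1) y = (if chi y then inv2 y else neg2 y)"
  using inK_n inK_n1 by (auto simp add: th_def)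
lemma th_b': "\<not> inK x \<Longrightarrow> th x (n + 1) = (if chi x then inv2 x else neg2 x)"
  using inK_n inK_n1 by (auto simp add: th_def)
lemma th_Z1: "inZ x \<Longrightarrow> inZ y \<Longrightarrow> \<not> (inK x \<and> inK y) \<Longrightarrow> y = neg2 x \<Longrightarrow>
    th x y = (if chi x then n else n + 1)"
  using inZ_ne[of x] inZ_ne[of y] unfolding th_def by auto
lemma th_Z2: "inZ x \<Longrightarrow> inZ y \<Longrightarrow> \<not> (inK x \<and> inK y) \<Longrightarrow> y \<noteq> neg2 x \<Longrightarrow> x = neg2 y \<Longrightarrow>
    th x y = (if chi y then n else n + 1)"
  using inZ_ne[of x] inZ_ne[of y] unfolding th_def by auto
lemma th_Z3: "inZ x \<Longrightarrow> inZ y \<Longrightarrow> \<not> (inK x \<and> inK y) \<Longrightarrow> y \<noteq> neg2 x \<Longrightarrow> x \<noteq> neg2 y \<Longrightarrow>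
    th x y = (- x - y) mod n"
  using inZ_ne[of x] inZ_ne[of y] unfolding th_def by auto

lemma L7: "inK x \<Longrightarrow> lab x \<in> {1,2,3,4,5,6,7}" by (rule lab_range)

lemma props_K: assumes x: "inK x" and y: "inK y" and xy: "x \<noteq> y"
  shows "inK (th x y) \<and> th x y \<noteq> x \<and> th x y \<noteq> y \<and> th x (th x y) = y"
proof -
  have lx: "lab x \<in> {1,2,3,4,5,6,7}" and ly: "lab y \<in> {1,2,3,4,5,6,7}" using x y lab_range by auto
  have lxy: "lab x \<noteq> lab y" using xy unlab_lab x y by metis
  define l where "l = xor (lab x) (lab y)"
  have l: "l \<in> {1,2,3,4,5,6,7}" "l \<noteq> lab x" "l \<noteq> lab y" using fano1[OF lx ly lxy] l_def by auto
  have z: "th x y = unlab l" using th_K[OF x y] l_def by simp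
  have kz: "inK (unlab l)" and lz: "lab (unlab l) = l" using lab_unlab[OF l(1)] by auto
  have "unlab l \<noteq> x" using lz l(2) by auto
  moreover have "unlab l \<noteq> y" using lz l(3) by auto
  moreover have "th x (unlab l) = y"
    using th_K[OF x kz] lz l_def fano_inv unlab_lab[OF y] by simp
  ultimately show ?thesis using z kz by simp
qed

lemma props_a: assumes y: "inV y" "\<not> inK y"
  shows "inZ (th n y) \<and> \<not> m dvd (th n y) \<and> th n y \<noteq> y \<and> th n (th n y) = y"
proof -
  have yz: "inZ y" "\<not> m dvd y" using nK_Z y by auto
  show ?thesis
  proof (cases "chi y")
    case True
    define z where "z = neg2 y"
    have z: "inZ z" "\<not> m dvd z" using neg2_Z m_neg2 yz z_def by auto
    have cz: "\<not> chi z" using chi_n2[OF yz(2)] True z_def by simp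
    have "th n z = inv2 z" using th_a[OF Z_nK[OF z]] cz by simp
    also have "\<dots> = y" using inv2_neg2[OF yz(1)] z_def by simp
    finally show ?thesis using th_a[OF y(2)] True z z_def neg2_ne'[OF yz(1) nK_nz[OF yz(2)]] by simp
  next
    case False
    define z where "z = inv2 y"
    have z: "inZ z" "\<not> m dvd z" using inv2_Z m_inv2 yz z_def by auto
    have cz: "chi z" using chi_i2[OF yz(2)] False z_def by simp
    have "th n z = neg2 z" using th_a[OF Z_nK[OF z]] cz by simp
    also have "\<dots> = y" using neg2_inv2[OF yz(1)] z_def by simp
    finally show ?thesis using th_a[OF y(2)] False z z_def inv2_ne[OF yz(1) nK_nz[OF yz(2)]] by simp
  qed
qed

lemma props_b: assumes y: "inV y" "\<not> inK y"
  shows "inZ (th (n+1) y) \<and> \<not> m dvd (th (n+1) y) \<and> th (n+1) y \<noteq> y \<and> th (n+1) (th (n+1) y) = y"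
proof -
  have yz: "inZ y" "\<not> m dvd y" using nK_Z y by auto
  show ?thesis
  proof (cases "chi y")
    case False
    define z where "z = neg2 y"
    have z: "inZ z" "\<not> m dvd z" using neg2_Z m_neg2 yz z_def by auto
    have cz: "chi z" using chi_n2[OF yz(2)] False z_def by simp
    have "th (n+1) z = inv2 z" using th_b[OF Z_nK[OF z]] cz by simp
    also have "\<dots> = y" using inv2_neg2[OF yz(1)] z_def by simp
    finally show ?thesis using th_b[OF y(2)] False z z_def neg2_ne'[OF yz(1) nK_nz[OF yz(2)]] by simp
  next
    case True
    define z where "z = inv2 y"
    have z: "inZ z" "\<not> m dvd z" using inv2_Z m_inv2 yz z_def by auto
    have cz: "\<not> chi z" using chi_i2[OF yz(2)] True z_def by simp
    have "th (n+1) z = neg2 z" using th_b[OF Z_nK[OF z]] cz by simp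
    also have "\<dots> = y" using neg2_inv2[OF yz(1)] z_def by simp
    finally show ?thesis using th_b[OF y(2)] True z z_def inv2_ne[OF yz(1) nK_nz[OF yz(2)]] by simp
  qed
qed

lemma props_a': assumes x: "inV x" "\<not> inK x"
  shows "inZ (th x n) \<and> th x n \<noteq> x \<and> th x (th x n) = n"
proof -
  have xz: "inZ x" "\<not> m dvd x" using nK_Z x by auto
  have x0: "x \<noteq> 0" using nK_nz[OF xz(2)] .
  show ?thesis
  proof (cases "chi x")
    case True
    define z where "z = neg2 x"
    have z: "inZ z" "\<not> m dvd z" using neg2_Z m_neg2 xz z_def by auto
    have "th x z = n" using th_Z1[OF xz(1) z(1)] Z_nK[OF z] True z_def by simp
    then show ?thesis using th_a'[OF x(2)] True z z_def neg2_ne'[OF xz(1) x0] by simp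
  next
    case False
    define z where "z = inv2 x"
    have z: "inZ z" "\<not> m dvd z" using inv2_Z m_inv2 xz z_def by auto
    have cz: "chi z" using chi_i2[OF xz(2)] False z_def by simp
    have "z \<noteq> neg2 x" using inv2_ne_neg2[OF xz(1) x0] z_def by simp
    moreover have "x = neg2 z" using neg2_inv2[OF xz(1)] z_def by simp
    ultimately have "th x z = n" using th_Z2[OF xz(1) z(1)] Z_nK[OF z] cz by simp
    then show ?thesis using th_a'[OF x(2)] False z z_def inv2_ne[OF xz(1) x0] by simp
  qed
qed

lemma props_b': assumes x: "inV x" "\<not> inK x"
  shows "inZ (th x (n+1)) \<and> th x (n+1) \<noteq> x \<and> th x (th x (n+1)) = n + 1"
proof -
  have xz: "inZ x" "\<not> m dvd x" using nK_Z x by auto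
  have x0: "x \<noteq> 0" using nK_nz[OF xz(2)] .
  show ?thesis
  proof (cases "chi x")
    case False
    define z where "z = neg2 x"
    have z: "inZ z" "\<not> m dvd z" using neg2_Z m_neg2 xz z_def by auto
    have "th x z = n + 1" using th_Z1[OF xz(1) z(1)] Z_nK[OF z] False z_def by simp
    then show ?thesis using th_b'[OF x(2)] False z z_def neg2_ne'[OF xz(1) x0] by simp
  next
    case True
    define z where "z = inv2 x"
    have z: "inZ z" "\<not> m dvd z" using inv2_Z m_inv2 xz z_def by auto
    have cz: "\<not> chi z" using chi_i2[OF xz(2)] True z_def by simp
    have "z \<noteq> neg2 x" using inv2_ne_neg2[OF xz(1) x0] z_def by simp
    moreover have "x = neg2 z" using neg2_inv2[OF xz(1)] z_def by simp
    ultimately have "th x z = n + 1" using th_Z2[OF xz(1) z(1)] Z_nK[OF z] cz by simp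
    then show ?thesis using th_b'[OF x(2)] True z z_def inv2_ne[OF xz(1) x0] by simp
  qed
qed

end


context cons begin

lemma lin: "n dvd A \<Longrightarrow> n dvd B \<Longrightarrow> E = a * A + b * B \<Longrightarrow> n dvd E"
  by simp
lemma linm: "m dvd A \<Longrightarrow> m dvd B \<Longrightarrow> E = a * A + b * B \<Longrightarrow> m dvd E"
  by simp

lemma neg2_0: "neg2 0 = 0" by (simp add: neg2_def)

lemma not_both: assumes x: "inZ x" and xy: "x \<noteq> y" and y: "y = neg2 x" shows "x \<noteq> neg2 y"
proof
  assume e: "x = neg2 y"
  then have "inv2 x = y" using inv2_neg2[OF neg2_Z] y by (metis inv2_neg2 x)
  show False
  proof (cases "x = 0")
    case True then show False using xy y neg2_0 by simp
  next
    case False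
    then show False using inv2_ne_neg2[OF x False] \<open>inv2 x = y\<close> y by simp
  qed
qed

lemma props_Z: assumes x: "inZ x" and y: "inZ y" and xy: "x \<noteq> y" and nk: "\<not> (inK x \<and> inK y)"
  shows "inV (th x y) \<and> th x y \<noteq> x \<and> th x y \<noteq> y \<and> th x (th x y) = y"
proof (cases "y = neg2 x")
  case True
  have mx: "\<not> m dvd x"
  proof
    assume "m dvd x"
    then have "m dvd y" using True m_neg2 by simp
    then show False using nk \<open>m dvd x\<close> x y inK_def by blast
  qed
  have kx: "\<not> inK x" using Z_nK[OF x mx] .
  have z: "th x y = (if chi x then n else n + 1)" using th_Z1[OF x y nk True] .
  show ?thesis
  proof (cases "chi x")
    case True
    then show ?thesis using z th_a'[OF kx] \<open>y = neg2 x\<close> inV_n inZ_ne[OF x] inZ_ne[OF y] by simp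
  next
    case False
    then show ?thesis using z th_b'[OF kx] \<open>y = neg2 x\<close> inV_n1 inZ_ne[OF x] inZ_ne[OF y] by simp
  qed
next
  case F1: False
  show ?thesis
  proof (cases "x = neg2 y")
    case True
    have my: "\<not> m dvd y"
    proof
      assume "m dvd y"
      then have "m dvd x" using True m_neg2 by simp
      then show False using nk \<open>m dvd y\<close> x y inK_def by blast
    qed
    have mx: "\<not> m dvd x" using my True m_neg2 by simp
    have kx: "\<not> inK x" using Z_nK[OF x mx] .
    have cx: "chi x = (\<not> chi y)" using chi_n2[OF my] True by simp
    have iy: "inv2 x = y" using inv2_neg2[OF y] True by simp
    have z: "th x y = (if chi y then n else n + 1)" using th_Z2[OF x y nk F1 True] .
    show ?thesis
    proof (cases "chi y")
      case True
      then show ?thesis using z th_a'[OF kx] cx iy inV_n inZ_ne[OF x] inZ_ne[OF y] by simp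
    next
      case False
      then show ?thesis using z th_b'[OF kx] cx iy inV_n1 inZ_ne[OF x] inZ_ne[OF y] by simp
    qed
  next
    case F2: False
    define z where "z = (- x - y) mod n"
    have thz: "th x y = z" using th_Z3[OF x y nk F1 F2] z_def by simp
    have zZ: "inZ z" using z_def inZ_mod by simp
    have dz: "n dvd (z + x + y)"
    proof -
      have "n dvd z - (- x - y)" unfolding z_def by (rule mod_d)
      then show ?thesis by (simp add: algebra_simps)
    qed
    have dx: "n dvd (neg2 x + 2 * x)" and dy: "n dvd (neg2 y + 2 * y)" using neg2_d by auto
    have zx: "z \<noteq> x"
    proof
      assume e: "z = x"
      have dv: "n dvd (neg2 x + 2 * x) - (z + x + y)" by (rule dvd_diff[OF dx dz])
      have eq: "(neg2 x + 2 * x) - (z + x + y) = neg2 x - y" using e by simp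
      have "n dvd (neg2 x - y)" using dv unfolding eq .
      then show False using eqZ[OF neg2_Z[of x] y] F1 by simp
    qed
    have zy: "z \<noteq> y"
    proof
      assume e: "z = y"
      have dv: "n dvd (neg2 y + 2 * y) - (z + x + y)" by (rule dvd_diff[OF dy dz])
      have eq: "(neg2 y + 2 * y) - (z + x + y) = neg2 y - x" using e by simp
      have "n dvd (neg2 y - x)" using dv unfolding eq .
      then show False using eqZ[OF neg2_Z[of y] x] F2 by simp
    qed
    have nk2: "\<not> (inK x \<and> inK z)"
    proof
      assume "inK x \<and> inK z"
      then have mx: "m dvd x" and mz: "m dvd z" using inZ_ne[OF x] inZ_ne[OF zZ] inK_def by auto
      have "m dvd (z + x + y)" using dz mdn dvd_trans by blast
      then have "m dvd (z + x + y) - x - z" using mx mz by (intro dvd_diff)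
      then have "m dvd y" by simp
      then have "inK y" using y inK_def by blast
      moreover have "inK x" using mx x inK_def by blast
      ultimately show False using nk by blast
    qed
    have n1: "z \<noteq> neg2 x"
    proof
      assume e: "z = neg2 x"
      have dv: "n dvd (z + x + y) - (neg2 x + 2 * x)" by (rule dvd_diff[OF dz dx])
      have eq: "(z + x + y) - (neg2 x + 2 * x) = y - x" using e by simp
      have "n dvd (y - x)" using dv unfolding eq .
      then show False using eqZ[OF y x] xy by simp
    qed
    have n2: "x \<noteq> neg2 z"
    proof
      assume e: "x = neg2 z"
      have dzz: "n dvd (neg2 z + 2 * z)" using neg2_d by auto
      have dv: "n dvd (neg2 y + 2 * y) + ((neg2 z + 2 * z) - 2 * (z + x + y))"
        by (rule dvd_add[OF dy dvd_diff[OF dzz dvd_mult[OF dz]]])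
      have eq: "(neg2 y + 2 * y) + ((neg2 z + 2 * z) - 2 * (z + x + y)) = neg2 y - x"
        using e by (simp add: algebra_simps)
      have "n dvd (neg2 y - x)" using dv unfolding eq .
      then show False using eqZ[OF neg2_Z[of y] x] F2 by simp
    qed
    have "th x z = (- x - z) mod n" using th_Z3[OF x zZ nk2 n1 n2] .
    also have "\<dots> = y"
    proof -
      have "n dvd - (z + x + y)" using dz by (simp only: dvd_minus_iff)
      moreover have "- (z + x + y) = (- x - z) - y" by simp
      ultimately show ?thesis using mod_char[OF y] by metis
    qed
    finally show ?thesis using thz zZ inV_Z zx zy by simp
  qed
qed

end


context cons begin

lemma th_main: assumes x: "inV x" and y: "inV y" and xy: "x \<noteq> y"
  shows "inV (th x y) \<and> th x y \<noteq> x \<and> th x y \<noteq> y \<and> th x (th x y) = y"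
proof (cases "inK x \<and> inK y")
  case True
  then show ?thesis using props_K[OF _ _ xy] inK_V by blast
next
  case nk: False
  show ?thesis
  proof (cases "x = n")
    case True
    then have "\<not> inK y" using nk inK_n by blast
    then have p: "inZ (th n y) \<and> \<not> m dvd th n y \<and> th n y \<noteq> y \<and> th n (th n y) = y" using props_a[OF y] by blast
    then show ?thesis using True inV_Z[of "th n y"] inZ_ne[of "th n y"] by auto
  next
    case xn: False
    show ?thesis
    proof (cases "x = n + 1")
      case True
      then have "\<not> inK y" using nk inK_n1 by blast
      then have p: "inZ (th (n+1) y) \<and> \<not> m dvd th (n+1) y \<and> th (n+1) y \<noteq> y \<and> th (n+1) (th (n+1) y) = y" using props_b[OF y] by blast
      then show ?thesis using True inV_Z[of "th (n+1) y"] inZ_ne[of "th (n+1) y"] by auto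
    next
      case xn1: False
      show ?thesis
      proof (cases "y = n")
        case True
        then have kx: "\<not> inK x" using nk inK_n by blast
        then have p: "inZ (th x n) \<and> th x n \<noteq> x \<and> th x (th x n) = n" using props_a'[OF x] by blast
        then show ?thesis using True inV_Z[of "th x n"] inZ_ne[of "th x n"] by auto
      next
        case yn: False
        show ?thesis
        proof (cases "y = n + 1")
          case True
          then have kx: "\<not> inK x" using nk inK_n1 by blast
          then have p: "inZ (th x (n+1)) \<and> th x (n+1) \<noteq> x \<and> th x (th x (n+1)) = n + 1" using props_b'[OF x] by blast
          then show ?thesis using True inV_Z[of "th x (n+1)"] inZ_ne[of "th x (n+1)"] by auto
        next
          case yn1: False
          have "inZ x" "inZ y" using inV_cases x y xn xn1 yn yn1 by auto
          then show ?thesis using props_Z[OF _ _ xy nk] by blast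
        qed
      qed
    qed
  qed
qed

lemma th_sym: assumes x: "inV x" and y: "inV y" and xy: "x \<noteq> y"
  shows "th y x = th x y"
proof (cases "inK x \<and> inK y")
  case True
  then show ?thesis using th_K by (simp add: xor.commute)
next
  case nk: False
  show ?thesis
  proof (cases "x = n \<or> x = n + 1 \<or> y = n \<or> y = n + 1")
    case True
    then show ?thesis
    proof (elim disjE)
      assume e: "x = n"
      then have "\<not> inK y" using nk inK_n by blast
      then show ?thesis using th_a th_a' e by simp
    next
      assume e: "x = n + 1"
      then have "\<not> inK y" using nk inK_n1 by blast
      then show ?thesis using th_b th_b' e by simp
    next
      assume e: "y = n"
      then have "\<not> inK x" using nk inK_n by blast
      then show ?thesis using th_a th_a' e by simp
    next
      assume e: "y = n + 1"
      then have "\<not> inK x" using nk inK_n1 by blast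
      then show ?thesis using th_b th_b' e by simp
    qed
  next
    case False
    then have zx: "inZ x" and zy: "inZ y" using inV_cases x y by auto
    have nk': "\<not> (inK y \<and> inK x)" using nk by blast
    show ?thesis
    proof (cases "y = neg2 x")
      case True
      have "x \<noteq> neg2 y" using not_both[OF zx xy True] .
      then show ?thesis using th_Z1[OF zx zy nk True] th_Z2[OF zy zx nk'] True by simp
    next
      case F1: False
      show ?thesis
      proof (cases "x = neg2 y")
        case True
        then show ?thesis using th_Z2[OF zx zy nk F1 True] th_Z1[OF zy zx nk' True] by simp
      next
        case False
        have e: "- y - x = - x - y" by simp
        show ?thesis using th_Z3[OF zx zy nk F1 False] th_Z3[OF zy zx nk' False F1] e
          by metis
      qed
    qed
  qed
qed

end


lemma sts_th:
  fixes V :: "'a set" and t :: "'a \<Rightarrow> 'a \<Rightarrow> 'a"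
  assumes fin: "finite V"
    and P: "\<And>x y. x \<in> V \<Longrightarrow> y \<in> V \<Longrightarrow> x \<noteq> y \<Longrightarrow>
       t x y \<in> V \<and> t x y \<noteq> x \<and> t x y \<noteq> y \<and> t x (t x y) = y \<and> t y x = t x y"
  shows "steiner_triple_system V {{x, y, t x y} | x y. x \<in> V \<and> y \<in> V \<and> x \<noteq> y} \<and>
    (\<forall>b x y. b \<in> {{x, y, t x y} | x y. x \<in> V \<and> y \<in> V \<and> x \<noteq> y} \<longrightarrow> x \<in> b \<longrightarrow> y \<in> b \<longrightarrow> x \<noteq> y
          \<longrightarrow> x \<in> V \<and> y \<in> V \<and> b = {x, y, t x y})"
proof -
  let ?B = "{{x, y, t x y} | x y. x \<in> V \<and> y \<in> V \<and> x \<noteq> y}"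
  have ch: "x \<in> V \<and> y \<in> V \<and> b = {x, y, t x y}" if b: "b \<in> ?B" and x: "x \<in> b" and y: "y \<in> b" and xy: "x \<noteq> y" for b x y
  proof -
    obtain u w where uw: "u \<in> V" "w \<in> V" "u \<noteq> w" and bd: "b = {u, w, t u w}" using b by blast
    have p1: "t u w \<in> V" "t u w \<noteq> u" "t u w \<noteq> w" "t u (t u w) = w" "t w u = t u w" using P[OF uw] by auto
    have p2: "t (t u w) u = w" using P[OF p1(1) uw(1) p1(2)] p1 by auto
    have p3: "t w (t u w) = u"
    proof -
      have "t w (t w u) = u" using P[OF uw(2) uw(1)] uw(3) by auto
      then show ?thesis using p1(5) by simp
    qed
    have p4: "t (t u w) w = u" using P[OF p1(1) uw(2) p1(3)] p3 by auto
    have "x \<in> V" "y \<in> V" using x y bd uw p1 by auto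
    moreover have "b = {x, y, t x y}"
      using x y xy bd p1 p2 p3 p4 by auto
    ultimately show ?thesis by blast
  qed
  have h1: "\<forall>b\<in>?B. b \<subseteq> V \<and> card b = 3"
  proof
    fix b assume "b \<in> ?B"
    then obtain u w where uw: "u \<in> V" "w \<in> V" "u \<noteq> w" and bd: "b = {u, w, t u w}" by blast
    have p1: "t u w \<in> V" "t u w \<noteq> u" "t u w \<noteq> w" using P[OF uw] by auto
    show "b \<subseteq> V \<and> card b = 3" using bd uw p1 by auto
  qed
  have h2: "\<forall>x\<in>V. \<forall>y\<in>V. x \<noteq> y \<longrightarrow> (\<exists>!b. b \<in> ?B \<and> x \<in> b \<and> y \<in> b)"
  proof (intro ballI impI)
    fix x y assume x: "x \<in> V" and y: "y \<in> V" and xy: "x \<noteq> y"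
    show "\<exists>!b. b \<in> ?B \<and> x \<in> b \<and> y \<in> b"
    proof
      show "{x, y, t x y} \<in> ?B \<and> x \<in> {x, y, t x y} \<and> y \<in> {x, y, t x y}" using x y xy by blast
    next
      fix b assume "b \<in> ?B \<and> x \<in> b \<and> y \<in> b"
      then show "b = {x, y, t x y}" using ch xy by blast
    qed
  qed
  have "steiner_triple_system V ?B" unfolding steiner_triple_system_def using fin h1 h2 by blast
  then show ?thesis using ch by blast
qed



context cons begin

lemma lab_n: "lab n = 1" by (simp add: lab_def)
lemma lab_n1: "lab (n + 1) = 6" by (simp add: lab_def)
lemma h_val: "th n (n + 1) = 4 * m"
  using th_K[OF inK_n inK_n1] lab_n lab_n1 by (simp add: unlab_def)
lemma h_bounds: "0 < 4 * m" "4 * m < n" using m_pos n_eq by linarith+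
lemma inZ_K: "inZ x \<Longrightarrow> inK x \<Longrightarrow> m dvd x" using inZ_ne inK_def by blast

lemma blockZ: assumes x: "inZ x" and y: "inZ y" and xy: "x \<noteq> y" and z: "inZ (th x y)"
  shows "(inK x \<and> inK y \<and> inK (th x y) \<and> 7 \<in> {lab x, lab y, lab (th x y)}) \<or> n dvd (x + y + th x y)"
proof (cases "inK x \<and> inK y")
  case True
  then have kx: "inK x" and ky: "inK y" by auto
  have lx: "lab x \<in> {2,3,4,5,7}" using labZ[OF kx x] by blast
  have ly: "lab y \<in> {2,3,4,5,7}" using labZ[OF ky y] by blast
  have p: "inK (th x y)" using props_K[OF kx ky xy] by blast
  have lxy: "lab x \<noteq> lab y" using xy unlab_lab kx ky by metis
  have l7: "xor (lab x) (lab y) \<in> {1,2,3,4,5,6,7}" using fano1[of "lab x" "lab y"] lx ly lxy by auto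
  have lz: "lab (th x y) = xor (lab x) (lab y)" using th_K[OF kx ky] lab_unlab[OF l7] by simp
  have "lab (th x y) \<in> {2,3,4,5,7}" using labZ[OF p z] by blast
  then have "7 \<in> {lab x, lab y, xor (lab x) (lab y)}" using fano2[of "lab x" "lab y"] lx ly lxy lz by auto
  then show ?thesis using kx ky p lz by simp
next
  case nk: False
  have "y \<noteq> neg2 x"
  proof
    assume "y = neg2 x"
    then have "th x y \<in> {n, n + 1}" using th_Z1[OF x y nk] by simp
    then show False using z inZ_ne by auto
  qed
  moreover have "x \<noteq> neg2 y"
  proof
    assume e: "x = neg2 y"
    show False
    proof (cases "y = neg2 x")
      case True then show ?thesis using \<open>y \<noteq> neg2 x\<close> by simp
    next
      case False
      then have "th x y \<in> {n, n + 1}" using th_Z2[OF x y nk False e] by simp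
      then show False using z inZ_ne by auto
    qed
  qed
  ultimately have t: "th x y = (- x - y) mod n" using th_Z3[OF x y nk] by simp
  have "n dvd th x y - (- x - y)" unfolding t by (rule mod_d)
  then show ?thesis by (simp add: algebra_simps)
qed

lemma blockA: assumes y: "inZ y" and nb: "th n y \<noteq> n + 1"
  shows "(inK y \<and> lab y \<in> {2,3,4,5} \<and> th n y = unlab (xor 1 (lab y)) \<and> inZ (th n y) \<and> m dvd y \<and> m dvd th n y)
     \<or> (\<not> inK y \<and> inZ (th n y) \<and> (\<exists>T. \<not> m dvd T \<and> chi T \<and> n dvd (y + th n y + T)))"
proof (cases "inK y")
  case True
  have yn: "y \<noteq> n" using inZ_ne[OF y] by simp
  have ly: "lab y \<in> {2,3,4,5,7}" using labZ[OF True y] by blast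
  have t: "th n y = unlab (xor 1 (lab y))" using th_K[OF inK_n True] lab_n by simp
  have p: "inK (th n y) \<and> th n y \<noteq> n" using props_K[OF inK_n True yn[symmetric]] by blast
  have "lab y \<noteq> 7"
  proof
    assume "lab y = 7"
    then have "th n y = unlab 6" using t by simp
    then show False using nb by (simp add: unlab_def)
  qed
  then have ly': "lab y \<in> {2,3,4,5}" using ly by auto
  have zZ: "inZ (th n y)" using p nb inK_def by auto
  show ?thesis using ly' t zZ inZ_K[OF zZ] p inZ_K[OF y True] True by blast
next
  case False
  have V: "inV y" using inV_Z[OF y] .
  have yz: "\<not> m dvd y" using nK_Z[OF V False] by simp
  have pa: "inZ (th n y)" using props_a[OF V False] by blast
  have ex: "\<exists>T. \<not> m dvd T \<and> chi T \<and> n dvd (y + th n y + T)"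
  proof (cases "chi y")
    case True
    have "th n y = neg2 y" using th_a[OF False] True by simp
    then have "n dvd (y + th n y + y)" using neg2_d[of y] by (simp add: algebra_simps)
    then show ?thesis using yz True by blast
  next
    case cF: False
    have t: "th n y = inv2 y" using th_a[OF False] cF by simp
    have "chi (inv2 y)" using chi_i2[OF yz] cF by simp
    moreover have "\<not> m dvd inv2 y" using m_inv2 yz by simp
    moreover have "n dvd (y + th n y + inv2 y)" using inv2_d[of y] t by (simp add: algebra_simps)
    ultimately show ?thesis by blast
  qed
  show ?thesis using pa ex False by blast
qed

lemma blockB: assumes y: "inZ y" and na: "th (n + 1) y \<noteq> n"
  shows "(inK y \<and> lab y \<in> {2,3,4,5} \<and> th (n + 1) y = unlab (xor 6 (lab y)) \<and> inZ (th (n + 1) y) \<and> m dvd y \<and> m dvd th (n + 1) y)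
     \<or> (\<not> inK y \<and> inZ (th (n + 1) y) \<and> (\<exists>T. \<not> m dvd T \<and> \<not> chi T \<and> n dvd (y + th (n + 1) y + T)))"
proof (cases "inK y")
  case True
  have yn: "y \<noteq> n + 1" using inZ_ne[OF y] by simp
  have ly: "lab y \<in> {2,3,4,5,7}" using labZ[OF True y] by blast
  have t: "th (n + 1) y = unlab (xor 6 (lab y))" using th_K[OF inK_n1 True] lab_n1 by simp
  have p: "inK (th (n + 1) y) \<and> th (n + 1) y \<noteq> n + 1" using props_K[OF inK_n1 True yn[symmetric]] by blast
  have "lab y \<noteq> 7"
  proof
    assume "lab y = 7"
    then have "th (n + 1) y = unlab 1" using t by simp
    then show False using na by (simp add: unlab_def)
  qed
  then have ly': "lab y \<in> {2,3,4,5}" using ly by auto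
  have zZ: "inZ (th (n + 1) y)" using p na inK_def by auto
  show ?thesis using ly' t zZ inZ_K[OF zZ] p inZ_K[OF y True] True by blast
next
  case False
  have V: "inV y" using inV_Z[OF y] .
  have yz: "\<not> m dvd y" using nK_Z[OF V False] by simp
  have pa: "inZ (th (n + 1) y)" using props_b[OF V False] by blast
  have ex: "\<exists>T. \<not> m dvd T \<and> \<not> chi T \<and> n dvd (y + th (n + 1) y + T)"
  proof (cases "chi y")
    case cF: False
    have "th (n + 1) y = neg2 y" using th_b[OF False] cF by simp
    then have "n dvd (y + th (n + 1) y + y)" using neg2_d[of y] by (simp add: algebra_simps)
    then show ?thesis using yz cF by blast
  next
    case True
    have t: "th (n + 1) y = inv2 y" using th_b[OF False] True by simp
    have "\<not> chi (inv2 y)" using chi_i2[OF yz] True by simp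
    moreover have "\<not> m dvd inv2 y" using m_inv2 yz by simp
    moreover have "n dvd (y + th (n + 1) y + inv2 y)" using inv2_d[of y] t by (simp add: algebra_simps)
    ultimately show ?thesis by blast
  qed
  show ?thesis using pa ex False by blast
qed

end


context cons begin

definition NN :: nat where "NN = nat n"
definition VN :: "nat set" where "VN = {0..<NN + 2}"
definition tN :: "nat \<Rightarrow> nat \<Rightarrow> nat" where "tN x y = nat (th (int x) (int y))"
definition BN :: "nat set set" where "BN = {{x, y, tN x y} | x y. x \<in> VN \<and> y \<in> VN \<and> x \<noteq> y}"

lemma NN_int: "int NN = n" using npos by (simp add: NN_def)
lemma VN_iff: "x \<in> VN \<longleftrightarrow> inV (int x)" using NN_int by (auto simp: VN_def inV_def)
lemma inV_nat: "inV z \<Longrightarrow> int (nat z) = z" by (simp add: inV_def)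
lemma tN_int: "x \<in> VN \<Longrightarrow> y \<in> VN \<Longrightarrow> x \<noteq> y \<Longrightarrow> int (tN x y) = th (int x) (int y)"
  unfolding tN_def using th_main VN_iff inV_nat by (metis of_nat_eq_iff)

lemma tN_props: assumes x: "x \<in> VN" and y: "y \<in> VN" and xy: "x \<noteq> y"
  shows "tN x y \<in> VN \<and> tN x y \<noteq> x \<and> tN x y \<noteq> y \<and> tN x (tN x y) = y \<and> tN y x = tN x y"
proof -
  have X: "inV (int x)" and Y: "inV (int y)" using x y VN_iff by auto
  have ixy: "int x \<noteq> int y" using xy by simp
  have m: "inV (th (int x) (int y)) \<and> th (int x) (int y) \<noteq> int x \<and> th (int x) (int y) \<noteq> int y
     \<and> th (int x) (th (int x) (int y)) = int y" using th_main[OF X Y ixy] .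
  have t: "int (tN x y) = th (int x) (int y)" using tN_int[OF x y xy] .
  have tV: "tN x y \<in> VN" using m t VN_iff by simp
  have n1: "tN x y \<noteq> x" using m t by auto
  have n2: "tN x y \<noteq> y" using m t by auto
  have "int (tN x (tN x y)) = th (int x) (int (tN x y))" using tN_int[OF x tV n1[symmetric]] .
  then have "int (tN x (tN x y)) = int y" using m t by simp
  then have e3: "tN x (tN x y) = y" by simp
  have "int (tN y x) = th (int y) (int x)" using tN_int[OF y x xy[symmetric]] .
  then have "int (tN y x) = int (tN x y)" using th_sym[OF X Y ixy] t by simp
  then have e4: "tN y x = tN x y" by simp
  show ?thesis using tV n1 n2 e3 e4 by blast
qed

lemma finVN: "finite VN" by (simp add: VN_def)

lemma BN_sts: "steiner_triple_system VN BN \<and>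
    (\<forall>b x y. b \<in> BN \<longrightarrow> x \<in> b \<longrightarrow> y \<in> b \<longrightarrow> x \<noteq> y \<longrightarrow> x \<in> VN \<and> y \<in> VN \<and> b = {x, y, tN x y})"
  unfolding BN_def by (rule sts_th[OF finVN tN_props])

lemma card_VN: "card VN = NN + 2" by (simp add: VN_def)

lemma gauss: "2 * (\<Sum>p<k. int p) = int k * (int k - 1)"
  by (induction k) (auto simp: algebra_simps)

end


context cons begin

definition fN :: "nat \<Rightarrow> int" where "fN p = (if p < NN then int p else 0)"

lemma char: "b \<in> BN \<Longrightarrow> x \<in> b \<Longrightarrow> y \<in> b \<Longrightarrow> x \<noteq> y \<Longrightarrow> x \<in> VN \<and> y \<in> VN \<and> b = {x, y, tN x y}"
  using BN_sts by blast

lemma other_elem: assumes b: "b \<in> BN" shows "\<exists>y\<in>b. y \<noteq> x"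
proof -
  obtain u w where "u \<in> VN" "w \<in> VN" "u \<noteq> w" "b = {u, w, tN u w}" using b BN_def by blast
  then show ?thesis by auto
qed

lemma total_dvd: "n dvd sum fN VN"
proof -
  have S: "sum fN VN = (\<Sum>p<NN. int p)"
  proof -
    have "VN = {..<NN} \<union> {NN, NN + 1}" by (auto simp: VN_def)
    then have "sum fN VN = sum fN {..<NN} + sum fN {NN, NN + 1}" by (simp add: sum.union_disjoint)
    moreover have "sum fN {NN, NN + 1} = 0" by (simp add: fN_def)
    moreover have "sum fN {..<NN} = (\<Sum>p<NN. int p)" by (rule sum.cong) (auto simp: fN_def)
    ultimately show ?thesis by simp
  qed
  have "2 * (\<Sum>p<NN. int p) = n * (n - 1)" using gauss[of NN] unfolding NN_int .
  then have "n dvd 2 * (\<Sum>p<NN. int p)" by simp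
  then have "n dvd (\<Sum>p<NN. int p)" by (rule canc[OF cop2n])
  then show ?thesis unfolding S .
qed

lemma int_lt: assumes "inZ (int x)" shows "x < NN"
proof -
  have "int x < n" using assms by (simp add: inZ_def)
  then have "int x < int NN" unfolding NN_int .
  then show ?thesis by simp
qed

lemma Zof: assumes x: "x \<in> VN" and a: "x \<noteq> NN" and b: "x \<noteq> NN + 1" shows "inZ (int x)"
proof -
  have "inZ (int x) \<or> int x = n \<or> int x = n + 1" using inV_cases VN_iff x by blast
  moreover have "int x \<noteq> n" using a NN_int by auto
  moreover have "int x \<noteq> n + 1" using b NN_int by auto
  ultimately show ?thesis by blast
qed

lemma sum3: "x \<noteq> y \<Longrightarrow> x \<noteq> z \<Longrightarrow> y \<noteq> z \<Longrightarrow> sum g {x, y, z} = g x + g y + (g z :: int)"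
  by simp

lemma no_pc: "\<not> parallel_class VN BN P"
proof
  assume pc: "parallel_class VN BN P"
  have PB: "P \<subseteq> BN" and UP: "\<Union>P = VN" and dj: "\<forall>b1\<in>P. \<forall>b2\<in>P. b1 \<noteq> b2 \<longrightarrow> b1 \<inter> b2 = {}"
    using pc unfolding parallel_class_def by auto
  have finb: "\<forall>b\<in>P. finite b" using UP finVN by (metis Union_upper finite_subset)
  have finP: "finite P" using UP finVN by (metis finite_UnionD)
  have tot0: "sum fN (\<Union>P) = (sum \<circ> sum) fN P" by (rule sum.Union_disjoint[OF finb dj])
  have tot: "sum (sum fN) P = sum fN VN" using tot0 UP by simp
  have ntot: "n dvd sum (sum fN) P" using tot total_dvd by simp
  define A where "A = NN"
  define Bq where "Bq = NN + 1"
  have AV: "A \<in> VN" and BV: "Bq \<in> VN" by (auto simp: A_def Bq_def VN_def)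
  have iA: "int A = n" and iB: "int Bq = n + 1" using NN_int by (auto simp: A_def Bq_def)
  obtain ba where ba: "ba \<in> P" "A \<in> ba" using AV UP by blast
  have baB: "ba \<in> BN" using ba PB by blast
  obtain y where y: "y \<in> ba" "y \<noteq> A" using other_elem[OF baB] by blast
  have bad: "ba = {A, y, tN A y}" and yV: "y \<in> VN" using char[OF baB ba(2) y(1) y(2)[symmetric]] by blast+
  have gen: "\<exists>u w. u \<in> VN \<and> w \<in> VN \<and> u \<noteq> w \<and> g = {u, w, tN u w} \<and> inZ (int u) \<and> inZ (int w) \<and>
         inZ (int (tN u w)) \<and> int (tN u w) = th (int u) (int w) \<and> sum fN g = int u + int w + int (tN u w)"
    if g: "g \<in> BN" "A \<notin> g" "Bq \<notin> g" for g
  proof -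
    obtain u w where uw: "u \<in> VN" "w \<in> VN" "u \<noteq> w" "g = {u, w, tN u w}" using g(1) BN_def by blast
    have tp: "tN u w \<in> VN \<and> tN u w \<noteq> u \<and> tN u w \<noteq> w" using tN_props[OF uw(1-3)] by blast
    have Zu: "inZ (int u)" using Zof[OF uw(1)] g uw(4) A_def Bq_def by auto
    have Zw: "inZ (int w)" using Zof[OF uw(2)] g uw(4) A_def Bq_def by auto
    have Zt: "inZ (int (tN u w))" using Zof tp g uw(4) A_def Bq_def by auto
    have "sum fN g = fN u + fN w + fN (tN u w)" using uw(3,4) tp sum3 by simp
    also have "\<dots> = int u + int w + int (tN u w)" using int_lt uw tp Zu Zw Zt by (simp add: fN_def)
    finally show ?thesis using uw Zu Zw Zt tN_int[OF uw(1-3)] by blast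
  qed
  show False
  proof (cases "Bq \<in> ba")
    case True
    have ba2: "ba = {A, Bq, tN A Bq}" using char[OF baB ba(2) True] A_def Bq_def by simp
    have "int (tN A Bq) = th (int A) (int Bq)" by (rule tN_int[OF AV BV]) (simp add: A_def Bq_def)
    then have hN: "int (tN A Bq) = 4 * m" using iA iB h_val by simp
    have hlt: "tN A Bq < NN" using hN h_bounds NN_int by linarith
    have sa: "sum fN ba = 4 * m" using ba2 hN hlt by (simp add: fN_def A_def Bq_def)
    have rest: "n dvd sum fN g" if g: "g \<in> P - {ba}" for g
    proof -
      have gB: "g \<in> BN" using g PB by blast
      have disj: "g \<inter> ba = {}" using dj g ba(1) by blast
      then have nA: "A \<notin> g" and nB: "Bq \<notin> g" and nh: "tN A Bq \<notin> g" using ba2 by auto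
      obtain u w where uw: "u \<in> VN" "w \<in> VN" "u \<noteq> w" "g = {u, w, tN u w}" "inZ (int u)" "inZ (int w)"
         "inZ (int (tN u w))" "int (tN u w) = th (int u) (int w)" "sum fN g = int u + int w + int (tN u w)"
        using gen[OF gB nA nB] by blast
      have iuw: "int u \<noteq> int w" using uw(3) by simp
      have "(inK (int u) \<and> inK (int w) \<and> inK (th (int u) (int w)) \<and> 7 \<in> {lab (int u), lab (int w), lab (th (int u) (int w))})
          \<or> n dvd (int u + int w + th (int u) (int w))"
        using blockZ[OF uw(5) uw(6) iuw] uw(7,8) by simp
      then show ?thesis
      proof
        assume c: "inK (int u) \<and> inK (int w) \<and> inK (th (int u) (int w)) \<and> 7 \<in> {lab (int u), lab (int w), lab (th (int u) (int w))}"
        have "unlab 7 = 4 * m" by (simp add: unlab_def)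
        then have "int u = 4 * m \<or> int w = 4 * m \<or> th (int u) (int w) = 4 * m"
          using c unlab_lab[of "int u"] unlab_lab[of "int w"] unlab_lab[of "th (int u) (int w)"] by auto
        then have "u = tN A Bq \<or> w = tN A Bq \<or> tN u w = tN A Bq" using hN uw(8) by auto
        then show ?thesis using nh uw(4) by auto
      next
        assume "n dvd (int u + int w + th (int u) (int w))"
        then show ?thesis using uw(8,9) by simp
      qed
    qed
    have "sum (sum fN) P = sum fN ba + sum (sum fN) (P - {ba})" using sum.remove[OF finP ba(1)] by simp
    moreover have "n dvd sum (sum fN) (P - {ba})" using rest by (rule dvd_sum)
    ultimately have "n dvd sum fN ba + sum (sum fN) (P - {ba})" using ntot by simp
    then have "n dvd sum fN ba" using \<open>n dvd sum (sum fN) (P - {ba})\<close> dvd_add_left_iff by blast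
    then have "n dvd 4 * m" using sa by simp
    then have "n \<le> 4 * m" using h_bounds by (simp add: zdvd_imp_le)
    then show False using h_bounds by simp
  next
    case nBa: False
    obtain bb where bb: "bb \<in> P" "Bq \<in> bb" using BV UP by blast
    have bbB: "bb \<in> BN" using bb PB by blast
    have bab: "ba \<noteq> bb" using nBa bb by blast
    have djab: "ba \<inter> bb = {}" using dj ba(1) bb(1) bab by blast
    have nAb: "A \<notin> bb" using djab ba by blast
    obtain y' where y': "y' \<in> bb" "y' \<noteq> Bq" using other_elem[OF bbB] by blast
    have bbd: "bb = {Bq, y', tN Bq y'}" and y'V: "y' \<in> VN" using char[OF bbB bb(2) y'(1) y'(2)[symmetric]] by blast+
    have yB: "y \<noteq> Bq" using nBa y by blast
    have Zy: "inZ (int y)" using Zof[OF yV] y(2) yB A_def Bq_def by simp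
    have y'A: "y' \<noteq> A" using nAb y' by blast
    have Zy': "inZ (int y')" using Zof[OF y'V] y'(2) y'A A_def Bq_def by simp
    have ta: "int (tN A y) = th n (int y)" using tN_int[OF AV yV y(2)[symmetric]] iA by simp
    have tb: "int (tN Bq y') = th (n + 1) (int y')" using tN_int[OF BV y'V y'(2)[symmetric]] iB by simp
    have taB: "tN A y \<noteq> Bq" using nBa bad by blast
    have tbA: "tN Bq y' \<noteq> A" using nAb bbd by blast
    have na1: "th n (int y) \<noteq> n + 1" using taB ta iB by (metis of_nat_eq_iff)
    have nb1: "th (n + 1) (int y') \<noteq> n" using tbA tb iA by (metis of_nat_eq_iff)
    have cA: "(inK (int y) \<and> lab (int y) \<in> {2,3,4,5} \<and> th n (int y) = unlab (xor 1 (lab (int y))) \<and> inZ (th n (int y)) \<and> m dvd int y \<and> m dvd th n (int y))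
     \<or> (\<not> inK (int y) \<and> inZ (th n (int y)) \<and> (\<exists>T. \<not> m dvd T \<and> chi T \<and> n dvd (int y + th n (int y) + T)))"
      using blockA[OF Zy na1] .
    have cB: "(inK (int y') \<and> lab (int y') \<in> {2,3,4,5} \<and> th (n + 1) (int y') = unlab (xor 6 (lab (int y'))) \<and> inZ (th (n + 1) (int y')) \<and> m dvd int y' \<and> m dvd th (n + 1) (int y'))
     \<or> (\<not> inK (int y') \<and> inZ (th (n + 1) (int y')) \<and> (\<exists>T. \<not> m dvd T \<and> \<not> chi T \<and> n dvd (int y' + th (n + 1) (int y') + T)))"
      using blockB[OF Zy' nb1] .
    have Zta: "inZ (th n (int y))" using cA by blast
    have Ztb: "inZ (th (n + 1) (int y'))" using cB by blast
    have tpa: "tN A y \<noteq> A \<and> tN A y \<noteq> y" using tN_props[OF AV yV y(2)[symmetric]] by blast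
    have tpb: "tN Bq y' \<noteq> Bq \<and> tN Bq y' \<noteq> y'" using tN_props[OF BV y'V y'(2)[symmetric]] by blast
    have sa: "sum fN ba = int y + th n (int y)"
    proof -
      have "sum fN ba = fN A + fN y + fN (tN A y)" using bad y(2) tpa sum3 by simp
      moreover have "fN A = 0" by (simp add: fN_def A_def)
      moreover have "fN y = int y" using int_lt[OF Zy] by (simp add: fN_def)
      moreover have "tN A y < NN" using Zta ta NN_int by (simp add: inZ_def)
      ultimately show ?thesis using ta by (simp add: fN_def)
    qed
    have sb: "sum fN bb = int y' + th (n + 1) (int y')"
    proof -
      have "sum fN bb = fN Bq + fN y' + fN (tN Bq y')" using bbd y'(2) tpb sum3 by simp
      moreover have "fN Bq = 0" by (simp add: fN_def Bq_def)
      moreover have "fN y' = int y'" using int_lt[OF Zy'] by (simp add: fN_def)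
      moreover have "tN Bq y' < NN" using Ztb tb NN_int by (simp add: inZ_def)
      ultimately show ?thesis using tb by (simp add: fN_def)
    qed
    have rest: "m dvd sum fN g" if g: "g \<in> P - {ba} - {bb}" for g
    proof -
      have gB: "g \<in> BN" using g PB by blast
      have nA: "A \<notin> g" using dj g ba by blast
      have nB: "Bq \<notin> g" using dj g bb by blast
      obtain u w where uw: "u \<in> VN" "w \<in> VN" "u \<noteq> w" "g = {u, w, tN u w}" "inZ (int u)" "inZ (int w)"
         "inZ (int (tN u w))" "int (tN u w) = th (int u) (int w)" "sum fN g = int u + int w + int (tN u w)"
        using gen[OF gB nA nB] by blast
      have iuw: "int u \<noteq> int w" using uw(3) by simp
      have "(inK (int u) \<and> inK (int w) \<and> inK (th (int u) (int w)) \<and> 7 \<in> {lab (int u), lab (int w), lab (th (int u) (int w))})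
          \<or> n dvd (int u + int w + th (int u) (int w))"
        using blockZ[OF uw(5) uw(6) iuw] uw(7,8) by simp
      then show ?thesis
      proof
        assume c: "inK (int u) \<and> inK (int w) \<and> inK (th (int u) (int w)) \<and> 7 \<in> {lab (int u), lab (int w), lab (th (int u) (int w))}"
        have "m dvd int u" "m dvd int w" "m dvd th (int u) (int w)" using c inZ_K uw(5,6,7,8) by auto
        then show ?thesis using uw(8,9) by simp
      next
        assume "n dvd (int u + int w + th (int u) (int w))"
        then have "n dvd sum fN g" using uw(8,9) by simp
        then show ?thesis using dvd_trans[OF mdn] by blast
      qed
    qed
    have bbP: "bb \<in> P - {ba}" using bb bab by blast
    have "sum (sum fN) P = sum fN ba + sum (sum fN) (P - {ba})" using sum.remove[OF finP ba(1)] by simp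
    moreover have "sum (sum fN) (P - {ba}) = sum fN bb + sum (sum fN) (P - {ba} - {bb})"
      using sum.remove[OF _ bbP] finP by simp
    moreover have "m dvd sum (sum fN) (P - {ba} - {bb})" using rest by (rule dvd_sum)
    moreover have "m dvd sum (sum fN) P" using ntot mdn dvd_trans by blast
    ultimately have "m dvd sum fN ba + sum fN bb + sum (sum fN) (P - {ba} - {bb})" by (simp add: add.assoc)
    then have mab: "m dvd sum fN ba + sum fN bb" using \<open>m dvd sum (sum fN) (P - {ba} - {bb})\<close> dvd_add_left_iff by blast
    show False
    proof (cases "inK (int y)")
      case kA: True
      then have A1: "lab (int y) \<in> {2,3,4,5} \<and> th n (int y) = unlab (xor 1 (lab (int y))) \<and> m dvd int y \<and> m dvd th n (int y)"
        using cA by blast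
      show False
      proof (cases "inK (int y')")
        case kB: True
        then have B1: "lab (int y') \<in> {2,3,4,5} \<and> th (n + 1) (int y') = unlab (xor 6 (lab (int y')))"
          using cB by blast
        obtain l where l: "l \<in> {lab (int y), xor 1 (lab (int y))}" "l \<in> {lab (int y'), xor 6 (lab (int y'))}"
          using fano3[of "lab (int y)" "lab (int y')"] A1 B1 by blast
        have "unlab l \<in> {int y, th n (int y)}" using l(1) A1 unlab_lab[OF kA] by auto
        then have e1: "unlab l \<in> {int y, int (tN A y)}" using ta by simp
        have "unlab l \<in> {int y', th (n + 1) (int y')}" using l(2) B1 unlab_lab[OF kB] by auto
        then have e2: "unlab l \<in> {int y', int (tN Bq y')}" using tb by simp
        have q1: "nat (unlab l) \<in> ba" using e1 bad by auto
        have q2: "nat (unlab l) \<in> bb" using e2 bbd by auto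
        show False using q1 q2 djab by blast
      next
        case kB: False
        then obtain T' where T': "\<not> m dvd T'" "n dvd (int y' + th (n + 1) (int y') + T')" using cB by blast
        have "m dvd int y + th n (int y)" using A1 by (intro dvd_add) blast+
        then have "m dvd sum fN ba" unfolding sa .
        then have m1: "m dvd sum fN bb" using mab dvd_add_right_iff by blast
        have "m dvd int y' + th (n + 1) (int y') + T'" using T'(2) dvd_trans[OF mdn] by blast
        then have "m dvd sum fN bb + T'" using sb by simp
        then have "m dvd T'" using m1 dvd_add_right_iff by blast
        then show False using T'(1) by simp
      qed
    next
      case kA: False
      then obtain T where T: "\<not> m dvd T" "chi T" "n dvd (int y + th n (int y) + T)" using cA by blast
      have "m dvd int y + th n (int y) + T" using T(3) dvd_trans[OF mdn] by blast
      then have mT: "m dvd sum fN ba + T" using sa by simp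
      show False
      proof (cases "inK (int y')")
        case kB: True
        then have B1: "m dvd int y' \<and> m dvd th (n + 1) (int y')" using cB by blast
        have "m dvd int y' + th (n + 1) (int y')" using B1 by (intro dvd_add) blast+
        then have "m dvd sum fN bb" unfolding sb .
        then have "m dvd sum fN ba" using mab dvd_add_left_iff by blast
        then have "m dvd T" using mT dvd_add_right_iff by blast
        then show False using T(1) by simp
      next
        case kB: False
        then obtain T' where T': "\<not> m dvd T'" "\<not> chi T'" "n dvd (int y' + th (n + 1) (int y') + T')" using cB by blast
        have "m dvd int y' + th (n + 1) (int y') + T'" using T'(3) dvd_trans[OF mdn] by blast
        then have mT': "m dvd sum fN bb + T'" using sb by simp
        have "m dvd (sum fN ba + T) + (sum fN bb + T') - (sum fN ba + sum fN bb)"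
          by (rule dvd_diff[OF dvd_add[OF mT mT'] mab])
        then have "m dvd T' - (- T)" by (simp add: algebra_simps)
        then have "[T' = - T] (mod m)" by (simp add: cong_iff_dvd_diff)
        then have "chi T' = chi (- T)" by (rule chi_cong)
        also have "\<dots> = chi T" using chi_neg[OF T(1)] .
        finally show False using T(2) T'(2) by simp
      qed
    qed
  qed
qed

end


context cons begin
lemma main_exists: "\<exists>(V::nat set) B. steiner_triple_system V B \<and> card V = nat n + 2 \<and> \<not> (\<exists>P. parallel_class V B P)"
proof (intro exI conjI)
  show "steiner_triple_system VN BN" using BN_sts by blast
  show "card VN = nat n + 2" using card_VN NN_def by simp
  show "\<not> (\<exists>P. parallel_class VN BN P)" using no_pc by blast
qed
end

lemma pow25: "(25::nat) ^ Suc k mod 30 = 25"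
proof (induction k)
  case 0 then show ?case by simp
next
  case (Suc k)
  have "(25::nat) ^ Suc (Suc k) mod 30 = (25 * (25 ^ Suc k mod 30)) mod 30"
    by (simp add: mod_mult_right_eq)
  also have "\<dots> = 25" using Suc by simp
  finally show ?case .
qed

lemma dvd4: assumes "(d::nat) dvd 4" "\<not> d dvd 1" "\<not> d dvd 2" shows "d = 4"
proof -
  have "d \<le> 4" using assms(1) by (simp add: dvd_imp_le)
  then have "d = 0 \<or> d = 1 \<or> d = 2 \<or> d = 3 \<or> d = 4" by presburger
  then show ?thesis using assms by auto
qed

lemma ord53: "ord 5 (3::nat) = 4"
proof -
  have "[(3::nat) ^ 4 = 1] (mod 5)" by (simp add: cong_def)
  then have d: "ord 5 (3::nat) dvd 4" using ord_divides by blast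
  have n1: "\<not> ord 5 (3::nat) dvd 1"
  proof
    assume "ord 5 (3::nat) dvd 1"
    then have "[(3::nat) ^ 1 = 1] (mod 5)" using ord_divides by blast
    then show False by (simp add: cong_def)
  qed
  have n2: "\<not> ord 5 (3::nat) dvd 2"
  proof
    assume "ord 5 (3::nat) dvd 2"
    then have "[(3::nat) ^ 2 = 1] (mod 5)" using ord_divides by blast
    then show False by (simp add: cong_def)
  qed
  show ?thesis by (rule dvd4[OF d n1 n2])
qed

lemma ord_m2_5: "ord_mod 5 (-2) = 4"
proof -
  have "nat ((-2) mod int 5) = 3" by simp
  then show ?thesis unfolding ord_mod_def using ord53 by simp
qed

lemma V_set_infinite: "infinite V_set"
proof -
  define f where "f k = (25::nat) ^ Suc k + 2" for k
  have sub: "range f \<subseteq> V_set"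
  proof
    fix v assume "v \<in> range f"
    then obtain k where v: "v = f k" by blast
    have "((25::nat) ^ Suc k + 2) mod 30 = ((25::nat) ^ Suc k mod 30 + 2) mod 30" by (rule mod_add_left_eq[symmetric])
    then have m: "v mod 30 = 27" using pow25[of k] unfolding v f_def by simp
    have pr: "ord_mod p (-2) mod 4 = 0" if p: "prime p" "p dvd v - 2" for p
    proof -
      have "v - 2 = 5 ^ (2 * Suc k)" unfolding v f_def by (simp add: power_mult)
      then have "p dvd 5 ^ (2 * Suc k)" using p(2) by simp
      then have "p dvd 5" using prime_dvd_power[OF p(1)] by blast
      moreover have "prime (5::nat)" by simp
      ultimately have "p = 5" using p(1) primes_dvd_imp_eq by blast
      then show ?thesis using ord_m2_5 by simp
    qed
    show "v \<in> V_set" unfolding V_set_def using m pr by (simp add: v f_def)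
  qed
  have "inj f" unfolding f_def inj_def by (simp add: power_inject_exp)
  then have "infinite (range f)" by (rule range_inj_infinite)
  then show ?thesis using sub infinite_super by blast
qed

lemma V_set_sts: assumes v: "v \<in> V_set"
  shows "\<exists>(V::nat set) B. steiner_triple_system V B \<and> card V = v \<and> \<not> (\<exists>P. parallel_class V B P)"
proof -
  have vm: "v mod 30 = 27" and vh: "\<forall>p. prime p \<and> p dvd (v - 2) \<longrightarrow> ord_mod p (-2) mod 4 = 0"
    using v unfolding V_set_def by auto
  define n where "n = int (v - 2)"
  have "v = 30 * (v div 30) + 27" using vm div_mult_mod_eq[of v 30] by linarith
  then obtain q where q: "v = 30 * q + 27" by blast
  have v2: "v \<ge> 27" using q by simp
  have e1: "v - 2 = 2 * (15 * q + 12) + 1" using q by simp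
  have e3: "v - 2 = 3 * (10 * q + 8) + 1" using q by simp
  have e5: "v - 2 = 5 * (6 * q + 5)" using q by simp
  have c1: "(v - 2) mod 2 = 1" unfolding e1 by presburger
  have c3: "(v - 2) mod 3 = 1" unfolding e3 by presburger
  have c5: "(v - 2) mod 5 = 0" unfolding e5 by presburger
  have npos: "n > 0" using v2 n_def by simp
  have ne1: "n = 2 * int (15 * q + 12) + 1" unfolding n_def e1 by simp
  have ne3: "n = 3 * int (10 * q + 8) + 1" unfolding n_def e3 by simp
  have ne5: "n = 5 * int (6 * q + 5)" unfolding n_def e5 by simp
  have nodd: "odd n" unfolding ne1 by presburger
  have n3: "\<not> 3 dvd n" unfolding ne3 by presburger
  have n5: "5 dvd n" unfolding ne5 by simp
  have neq: "n = 5 * (n div 5)" using n5 by simp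
  have hyp: "\<forall>p::nat. prime p \<and> int p dvd n \<longrightarrow> ord_mod p (-2) mod 4 = 0"
    using vh n_def by (simp add: of_nat_dvd_iff)
  interpret C: cons n "n div 5"
    using npos nodd n3 neq hyp by unfold_locales auto
  have "nat n + 2 = v" using n_def v2 by simp
  then show ?thesis using C.main_exists by simp
qed

theorem theorem1:
  shows "infinite V_set \<and>
    (\<forall>v\<in>V_set. \<exists>(V::nat set) B. steiner_triple_system V B \<and> card V = v \<and>
        \<not> (\<exists>P. parallel_class V B P))"
  using V_set_infinite V_set_sts by blast



end
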